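(* Let $u:\mathbb{R}^d\to\mathbb{R}$ be $\mathbb{Z}^d$-periodic and such that $D^2u\succeq-\lambda I_d$ in the weak sense, for some $\lambda\ge0$. Then for every $x\in\mathbb{R}^d$ and every $p\in\partial u(x)$, one has $|p|_\infty\le\frac12\lambda$, where $|p|_\infty=\max_i|p_i|$.
   Context: $\partial u(x)$ denotes the subdifferential of the semi-convex function $u$ at $x$ (the set of $p$ with $u(y)\ge u(x)+p\cdot(y-x)-\frac\lambda2|y-x|^2$ for all $y$). *)

theory Defs
  imports "HOL-Analysis.Analysis"
begin

definition zd_periodic :: "(real ^ 'n \<Rightarrow> real) \<Rightarrow> bool" where
  "zd_periodic u \<longleftrightarrow> (\<forall>x k. (\<forall>i. k $ i \<in> \<int>) \<longrightarrow> u (x + k) = u x)"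

text \<open>D^2 u \<succeq> -lam I in the weak sense: u + lam/2 |x|^2 is convex (semi-convexity).\<close>
definition semiconvex :: "real \<Rightarrow> (real ^ 'n \<Rightarrow> real) \<Rightarrow> bool" where
  "semiconvex lam u \<longleftrightarrow> convex_on UNIV (\<lambda>x. u x + lam / 2 * (norm x)\<^sup>2)"

definition subdiff :: "real \<Rightarrow> (real ^ 'n \<Rightarrow> real) \<Rightarrow> real ^ 'n \<Rightarrow> (real ^ 'n) set" where
  "subdiff lam u x = {p. \<forall>y. u y \<ge> u x + p \<bullet> (y - x) - lam / 2 * (norm (y - x))\<^sup>2}"

end

theory Submission
  imports Defs
begin

lemma aux:
  fixes u :: "real ^ 'n \<Rightarrow> real"
  assumes "zd_periodic u" and "p \<in> subdiff lam u x" and "c = 1 \<or> c = -1"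
  shows "c * p $ i \<le> lam / 2"
proof -
  let ?k = "axis i c :: real ^ 'n"
  have k: "\<forall>j. ?k $ j \<in> \<int>" using assms(3) by (auto simp: axis_def)
  have "u (x + ?k) = u x" using assms(1) k unfolding zd_periodic_def by blast
  moreover have "u (x + ?k) \<ge> u x + p \<bullet> ?k - lam / 2 * (norm ?k)\<^sup>2"
    using assms(2) unfolding subdiff_def by (metis (no_types, lifting) add_diff_cancel_left' mem_Collect_eq)
  moreover have "p \<bullet> ?k = c * p $ i" by (simp add: inner_axis mult.commute)
  moreover have "axis i (-1::real) = - axis i 1" by (simp add: axis_def vec_eq_iff)
  then have "(norm ?k)\<^sup>2 = 1" using assms(3) by (metis norm_axis_1 norm_minus_cancel power_one)
  ultimately show ?thesis by (metis (no_types, lifting) add_le_cancel_left diff_le_eq mult.right_neutral add.commute)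
qed

theorem mainTheorem3:
  fixes u :: "real ^ 'n \<Rightarrow> real" and lam :: real
  assumes "lam \<ge> 0"
    and "zd_periodic u"
    and "semiconvex lam u"
    and "p \<in> subdiff lam u x"
  shows "(\<forall>i. \<bar>p $ i\<bar> \<le> lam / 2)"
proof
  fix i
  have "1 * p $ i \<le> lam / 2" by (rule aux[OF assms(2) assms(4)]) simp
  moreover have "(-1) * p $ i \<le> lam / 2" by (rule aux[OF assms(2) assms(4)]) simp
  ultimately show "\<bar>p $ i\<bar> \<le> lam / 2" by linarith
qed

end
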